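(* Consider a multi-threaded program in the ActiveMonitor execution model described in the context, in which every execution satisfies Rules 1 and 2 below (Rule 3 of forcing completion across different monitors is not assumed). Then every such execution is linearizable, where the invocation of a monitor operation is interpreted as the submission of its corresponding task and its response is interpreted as the completion of that task, and where the per-thread order is the thread order $<$ defined in the context. That is, there exists a legal sequential history of all operations, consistent with the order in which the monitor threads execute the tasks, that respects the thread order $<$ of every worker thread (taking as the linearization point of each operation the instant at which the monitor thread finishes executing the corresponding task). Rule 1 (Mutex invariant): all tasks of a single monitor object are executed by the same monitor thread. Rule 2: for any two tasks $s,t$ submitted to the same monitor $M$ with $proc(s)=proc(t)$, if $sub(s)<sub(t)$ then $exe(s)<exe(t)$.
   Context: Execution model (ActiveMonitor). A monitor object encapsulates shared data; each monitor object is executed by a monitor thread. Worker threads (threads created by the user program) never execute monitor methods directly: each invocation of a monitor method by a worker thread is replaced by the submission of an equivalent monitor task to the monitor thread, which executes it. A monitor task $t$ consists of a boolean precondition $P$ and a set of statements $\mathcal{S}$; $t$ is executable when $P$ holds, and then the statements of $\mathcal{S}$ may be executed to complete $t$. Each task is either blocking or non-blocking. If a worker thread submits a blocking task, it cannot execute its next instruction (in particular cannot submit another task) until the task has been completed. If it submits a non-blocking task, it continues immediately, while the task is executed by the monitor thread; if the worker thread later needs the result of a non-blocking task, it blocks until that task is completed. Notation: $proc(t)$ is the worker thread that submits task $t$; $sub(t)$ is the time at which $t$ is submitted to its monitor; $exe(t)$ is the time at which the monitor thread starts executing $t$. Thread order: let $s_1, s_2, \dots, s_m$ be the operations (tasks)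 issued by one worker thread, in the order in which the thread issues them. The thread order $<$ on them is the (transitive closure of the) relation given by: if $s_i$ is blocking then $s_i < s_j$ for all $j>i$; if $s_i$ and $s_j$ are operations on the same monitor object and $i<j$ then $s_i<s_j$; if $s_i$ is non-blocking and its result is required before $s_k$ is issued, then $s_i<s_j$ for all $j\ge k$. *)

theory Defs
  imports Complex_Main
begin

text \<open>Each task records: the worker thread submitting it (proc), its monitor
  object (mon), its position in the submitting thread's issue sequence (idx), whether it is
  blocking, for a non-blocking task the index of the first operation of the same worker thread
  before whose issue its result is required (need; None if never), the submission time (sub),
  the time the monitor thread starts executing it (exe), the completion time (fin), the monitor
  thread executing it (runner), the operation it performs (op) and its result (res).\<close>

record ('k, 'w, 'm, 'mt, 'op, 'r) am_exec =
  tasks   :: "'k set"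
  proc    :: "'k \<Rightarrow> 'w"
  mon     :: "'k \<Rightarrow> 'm"
  idx     :: "'k \<Rightarrow> nat"
  blocking :: "'k \<Rightarrow> bool"
  need    :: "'k \<Rightarrow> nat option"
  sub     :: "'k \<Rightarrow> real"
  exe     :: "'k \<Rightarrow> real"
  fin     :: "'k \<Rightarrow> real"
  runner  :: "'k \<Rightarrow> 'mt"
  op      :: "'k \<Rightarrow> 'op"
  res     :: "'k \<Rightarrow> 'r"

text \<open>Sequential specification of monitor objects: step m s o s' r means that in state s of
  monitor m the operation o is executable (its precondition holds) and its statements may
  lead to state s' returning r.\<close>

type_synonym ('m, 's, 'op, 'r) seq_spec = "'m \<Rightarrow> 's \<Rightarrow> 'op \<Rightarrow> 's \<Rightarrow> 'r \<Rightarrow> bool"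

fun is_run :: "('s \<Rightarrow> 'op \<Rightarrow> 's \<Rightarrow> 'r \<Rightarrow> bool) \<Rightarrow> 's \<Rightarrow> ('op \<times> 'r) list \<Rightarrow> bool" where
  "is_run st s [] = True"
| "is_run st s ((o1, r) # xs) = (\<exists>s'. st s o1 s' r \<and> is_run st s' xs)"

definition legal_for :: "('m, 's, 'op, 'r) seq_spec \<Rightarrow> ('m \<Rightarrow> 's)
    \<Rightarrow> ('k, 'w, 'm, 'mt, 'op, 'r) am_exec \<Rightarrow> 'm \<Rightarrow> 'k list \<Rightarrow> bool" where
  "legal_for spec init E m xs \<longleftrightarrow>
     is_run (spec m) (init m) (map (\<lambda>t. (op E t, res E t)) xs)"

definition legal_history :: "('m, 's, 'op, 'r) seq_spec \<Rightarrow> ('m \<Rightarrow> 's)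
    \<Rightarrow> ('k, 'w, 'm, 'mt, 'op, 'r) am_exec \<Rightarrow> 'k list \<Rightarrow> bool" where
  "legal_history spec init E L \<longleftrightarrow>
     (\<forall>m. legal_for spec init E m (filter (\<lambda>t. mon E t = m) L))"

definition am_execution :: "('m, 's, 'op, 'r) seq_spec \<Rightarrow> ('m \<Rightarrow> 's)
    \<Rightarrow> ('k, 'w, 'm, 'mt, 'op, 'r) am_exec \<Rightarrow> bool" where
  "am_execution spec init E \<longleftrightarrow>
     finite (tasks E)
   \<comment> \<open>each worker thread issues its operations one after another, in the order given by idx\<close>
   \<and> (\<forall>s\<in>tasks E. \<forall>t\<in>tasks E. proc E s = proc E t \<and> idx E s = idx E t \<longrightarrow> s = t)
   \<and> (\<forall>s\<in>tasks E. \<forall>t\<in>tasks E. proc E s = proc E t \<and> idx E s < idx E t \<longrightarrow> sub E s < sub E t)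
   \<comment> \<open>a task is executed after it is submitted and completes after execution starts\<close>
   \<and> (\<forall>t\<in>tasks E. sub E t \<le> exe E t \<and> exe E t < fin E t)
   \<comment> \<open>blocking task: the thread cannot submit anything until the task is completed\<close>
   \<and> (\<forall>s\<in>tasks E. \<forall>t\<in>tasks E. blocking E s \<and> proc E s = proc E t \<and> idx E s < idx E t
          \<longrightarrow> fin E s \<le> sub E t)
   \<comment> \<open>non-blocking task whose result is required before operation number k is issued\<close>
   \<and> (\<forall>s\<in>tasks E. \<forall>t\<in>tasks E. \<forall>k. \<not> blocking E s \<and> need E s = Some k
          \<and> proc E s = proc E t \<and> k \<le> idx E t \<longrightarrow> fin E s \<le> sub E t)
   \<comment> \<open>a monitor thread executes one task at a time\<close>
   \<and> (\<forall>s\<in>tasks E. \<forall>t\<in>tasks E. runner E s = runner E t \<and> s \<noteq> t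
          \<longrightarrow> fin E s \<le> exe E t \<or> fin E t \<le> exe E s)
   \<comment> \<open>each monitor's tasks, in the order the monitor executes them, respect the sequential
       specification (preconditions hold when executed, results as recorded)\<close>
   \<and> (\<forall>m. \<exists>xs. set xs = {t\<in>tasks E. mon E t = m}
          \<and> sorted_wrt (\<lambda>a b. exe E a < exe E b) xs \<and> legal_for spec init E m xs)"

definition rule1 :: "('k, 'w, 'm, 'mt, 'op, 'r) am_exec \<Rightarrow> bool" where
  "rule1 E \<longleftrightarrow> (\<forall>s\<in>tasks E. \<forall>t\<in>tasks E. mon E s = mon E t \<longrightarrow> runner E s = runner E t)"

definition rule2 :: "('k, 'w, 'm, 'mt, 'op, 'r) am_exec \<Rightarrow> bool" where
  "rule2 E \<longleftrightarrow> (\<forall>s\<in>tasks E. \<forall>t\<in>tasks E.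
      mon E s = mon E t \<and> proc E s = proc E t \<and> sub E s < sub E t \<longrightarrow> exe E s < exe E t)"

definition thread_step :: "('k, 'w, 'm, 'mt, 'op, 'r) am_exec \<Rightarrow> 'k \<Rightarrow> 'k \<Rightarrow> bool" where
  "thread_step E s t \<longleftrightarrow> s \<in> tasks E \<and> t \<in> tasks E \<and> proc E s = proc E t \<and> idx E s < idx E t
     \<and> (blocking E s \<or> mon E s = mon E t
        \<or> (\<not> blocking E s \<and> (\<exists>k. need E s = Some k \<and> k \<le> idx E t)))"

definition thread_order :: "('k, 'w, 'm, 'mt, 'op, 'r) am_exec \<Rightarrow> 'k \<Rightarrow> 'k \<Rightarrow> bool" where
  "thread_order E = (thread_step E)\<^sup>+\<^sup>+"

definition before :: "'k list \<Rightarrow> 'k \<Rightarrow> 'k \<Rightarrow> bool" where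
  "before L a b \<longleftrightarrow> (\<exists>i j. i < j \<and> j < length L \<and> L ! i = a \<and> L ! j = b)"

end

theory Submission
  imports Defs
begin

theorem lemma2:
  fixes spec :: "('m, 's, 'op, 'r) seq_spec"
    and init :: "'m \<Rightarrow> 's"
    and E :: "('k, 'w, 'm, 'mt, 'op, 'r) am_exec"
  assumes "am_execution spec init E"
    and "rule1 E"
    and "rule2 E"
  shows "\<exists>L. distinct L \<and> set L = tasks E
           \<and> legal_history spec init E L
           \<and> (\<forall>a\<in>tasks E. \<forall>b\<in>tasks E. mon E a = mon E b \<and> exe E a < exe E b \<longrightarrow> before L a b)
           \<and> (\<forall>a b. thread_order E a b \<longrightarrow> before L a b)
           \<and> (\<forall>a\<in>tasks E. \<forall>b\<in>tasks E. fin E a < sub E b \<longrightarrow> before L a b)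
           \<and> (\<forall>a\<in>tasks E. \<forall>b\<in>tasks E. fin E a < fin E b \<longrightarrow> before L a b)"
proof -
  note A = assms(1)[unfolded am_execution_def]
  have fin: "finite (tasks E)" using A by (elim conjE) assumption
  have idxinj: "\<forall>s\<in>tasks E. \<forall>t\<in>tasks E. proc E s = proc E t \<and> idx E s = idx E t \<longrightarrow> s = t"
    using A by (elim conjE) assumption
  have subord: "\<forall>s\<in>tasks E. \<forall>t\<in>tasks E. proc E s = proc E t \<and> idx E s < idx E t \<longrightarrow> sub E s < sub E t"
    using A by (elim conjE) assumption
  have ef: "\<forall>t\<in>tasks E. sub E t \<le> exe E t \<and> exe E t < fin E t" using A by (elim conjE) assumption
  have blk: "\<forall>s\<in>tasks E. \<forall>t\<in>tasks E. blocking E s \<and> proc E s = proc E t \<and> idx E s < idx E t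
          \<longrightarrow> fin E s \<le> sub E t" using A by (elim conjE) assumption
  have nd: "\<forall>s\<in>tasks E. \<forall>t\<in>tasks E. \<forall>k. \<not> blocking E s \<and> need E s = Some k
          \<and> proc E s = proc E t \<and> k \<le> idx E t \<longrightarrow> fin E s \<le> sub E t" using A by (elim conjE) assumption
  have run: "\<forall>s\<in>tasks E. \<forall>t\<in>tasks E. runner E s = runner E t \<and> s \<noteq> t
          \<longrightarrow> fin E s \<le> exe E t \<or> fin E t \<le> exe E s" using A by (elim conjE) assumption
  have leg: "\<forall>m. \<exists>xs. set xs = {t\<in>tasks E. mon E t = m}
          \<and> sorted_wrt (\<lambda>a b. exe E a < exe E b) xs \<and> legal_for spec init E m xs"
    using A by (elim conjE) assumption
  have r1: "\<And>s t. s \<in> tasks E \<Longrightarrow> t \<in> tasks E \<Longrightarrow> mon E s = mon E t \<Longrightarrow> runner E s = runner E t"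
    using assms(2) unfolding rule1_def by blast
  have r2: "\<And>s t. s \<in> tasks E \<Longrightarrow> t \<in> tasks E \<Longrightarrow> mon E s = mon E t \<Longrightarrow> proc E s = proc E t
      \<Longrightarrow> sub E s < sub E t \<Longrightarrow> exe E s < exe E t"
    using assms(3) unfolding rule2_def by blast
  have monexe: "fin E a < fin E b" if "a \<in> tasks E" "b \<in> tasks E" "mon E a = mon E b" "exe E a < exe E b" for a b
  proof -
    have "a \<noteq> b" using that by auto
    then have "fin E a \<le> exe E b \<or> fin E b \<le> exe E a" using run r1 that by blast
    then show ?thesis using ef that by fastforce
  qed
  have moninj: "fin E a \<noteq> fin E b" if "a \<in> tasks E" "b \<in> tasks E" "mon E a = mon E b" "a \<noteq> b" for a b
  proof -
    have "fin E a \<le> exe E b \<or> fin E b \<le> exe E a" using run r1 that by blast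
    then show ?thesis using ef that by fastforce
  qed
  have stepfin: "fin E s < fin E t" if "thread_step E s t" for s t
  proof -
    have st: "s \<in> tasks E" "t \<in> tasks E" "proc E s = proc E t" "idx E s < idx E t"
      using that unfolding thread_step_def by auto
    have c: "blocking E s \<or> mon E s = mon E t \<or> (\<not> blocking E s \<and> (\<exists>k. need E s = Some k \<and> k \<le> idx E t))"
      using that unfolding thread_step_def by auto
    show ?thesis
    proof (cases "blocking E s")
      case True
      then show ?thesis using blk st ef by fastforce
    next
      case False
      show ?thesis
      proof (cases "mon E s = mon E t")
        case True
        have "sub E s < sub E t" using subord st by blast
        then have "exe E s < exe E t" using r2 st True by blast
        then show ?thesis using monexe st True by blast
      next
        case F2: False
        then obtain k where "need E s = Some k" "k \<le> idx E t" using c False by blast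
        then have "fin E s \<le> sub E t" using nd st False by blast
        then show ?thesis using ef st by fastforce
      qed
    qed
  qed
  have tofin: "fin E a < fin E b" if "thread_order E a b" for a b
    using that unfolding thread_order_def
  proof (induction rule: tranclp.induct)
    case (r_into_trancl a b) then show ?case using stepfin by blast
  next
    case (trancl_into_trancl a b c) then show ?case using stepfin by fastforce
  qed
  have tomem: "a \<in> tasks E \<and> b \<in> tasks E" if "thread_order E a b" for a b
    using that unfolding thread_order_def
    by (induction rule: tranclp.induct) (auto simp: thread_step_def)
  obtain xs0 where xs0: "set xs0 = tasks E" "distinct xs0" using finite_distinct_list[OF fin] by blast
  define L where "L = sort_key (fin E) xs0"
  have Ld: "distinct L" unfolding L_def using xs0(2) by simp
  have Ls: "set L = tasks E" unfolding L_def using xs0(1) by simp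
  have Lsort: "sorted (map (fin E) L)" unfolding L_def by (rule sorted_sort_key)
  have bef: "before L a b" if "a \<in> tasks E" "b \<in> tasks E" "fin E a < fin E b" for a b
  proof -
    have "a \<in> set L" using that(1) Ls by simp
    then obtain i where i: "i < length L" "L ! i = a" by (auto simp: in_set_conv_nth)
    have "b \<in> set L" using that(2) Ls by simp
    then obtain j where j: "j < length L" "L ! j = b" by (auto simp: in_set_conv_nth)
    have "i < j"
    proof (rule ccontr)
      assume "\<not> i < j"
      then have ji: "j \<le> i" by simp
      have "map (fin E) L ! j \<le> map (fin E) L ! i"
        by (rule sorted_nth_mono[OF Lsort ji]) (use i in simp)
      then have "fin E b \<le> fin E a" using i j by simp
      then show False using that(3) by simp
    qed
    then show ?thesis unfolding before_def using i j by blast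
  qed
  have legal: "legal_history spec init E L"
    unfolding legal_history_def
  proof
    fix m
    obtain xs where xs: "set xs = {t\<in>tasks E. mon E t = m}"
      "sorted_wrt (\<lambda>a b. exe E a < exe E b) xs" "legal_for spec init E m xs"
      using leg by blast
    let ?F = "filter (\<lambda>t. mon E t = m) L"
    have sF: "set ?F = {t\<in>tasks E. mon E t = m}" using Ls by auto
    have S: "set ?F \<union> set xs = {t\<in>tasks E. mon E t = m}" using sF xs(1) by simp
    have injS: "inj_on (fin E) {t\<in>tasks E. mon E t = m}"
    proof (rule inj_onI)
      fix a b assume a: "a \<in> {t\<in>tasks E. mon E t = m}" and b: "b \<in> {t\<in>tasks E. mon E t = m}"
        and e: "fin E a = fin E b"
      show "a = b"
      proof (rule ccontr)
        assume "a \<noteq> b"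
        then have "fin E a \<noteq> fin E b" using a b moninj by simp
        then show False using e by simp
      qed
    qed
    have inj: "inj_on (fin E) (set ?F \<union> set xs)" using injS S by simp
    have x1: "sorted_wrt (\<lambda>a b. fin E a < fin E b) xs"
    proof (rule sorted_wrt_mono_rel[OF _ xs(2)])
      fix a b assume a: "a \<in> set xs" and b: "b \<in> set xs" and e: "exe E a < exe E b"
      have "a \<in> tasks E" "b \<in> tasks E" "mon E a = mon E b" using a b xs(1) by auto
      then show "fin E a < fin E b" using monexe e by blast
    qed
    then have "sorted_wrt (<) (map (fin E) xs)" by (simp add: sorted_wrt_map)
    then have x2: "sorted (map (fin E) xs)" "distinct (map (fin E) xs)"
      by (auto simp: strict_sorted_iff)
    have f1: "sorted (map (fin E) ?F)" using Lsort by (rule sorted_filter)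
    have f2: "distinct (map (fin E) ?F)"
      unfolding distinct_map using Ld injS sF by simp
    have "?F = xs"
      using map_sorted_distinct_set_unique[OF inj f1 f2 x2] sF xs(1) by simp
    then show "legal_for spec init E m ?F" using xs(3) by simp
  qed
  show ?thesis
  proof (intro exI[of _ L] conjI ballI allI impI)
    show "distinct L" by (rule Ld)
    show "set L = tasks E" by (rule Ls)
    show "legal_history spec init E L" by (rule legal)
  next
    fix a b assume "a \<in> tasks E" "b \<in> tasks E" "mon E a = mon E b \<and> exe E a < exe E b"
    then show "before L a b" using bef monexe by blast
  next
    fix a b assume "thread_order E a b"
    then show "before L a b" using bef tofin tomem by blast
  next
    fix a b assume "a \<in> tasks E" "b \<in> tasks E" "fin E a < sub E b"
    then show "before L a b" using bef ef by (meson less_le_trans order_less_imp_le)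
  next
    fix a b assume "a \<in> tasks E" "b \<in> tasks E" "fin E a < fin E b"
    then show "before L a b" using bef by blast
  qed
qed

end
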